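(* Let $\mu_1\in\mathbb{R}$, $\sigma_1>0$, $\sigma>0$ and $k>0$. Consider two stocks with positive prices $p_{1t},p_{2t}$ at discrete times $t$, such that $$\log(p_{1,t+1})=\log(p_{1t})+\mu_1+\delta_{1,t+1},\qquad \epsilon_t:=\log(p_{2t})-\log(p_{1t}),$$ where the $\delta_{1t}$ are i.i.d. $N(0,\sigma_1^2)$, the $\epsilon_t$ are i.i.d. $N(0,\sigma^2)$, and the family $(\delta_{1t})_t$ is independent of the family $(\epsilon_t)_t$. Define the stock returns $r_{i,t+1}=p_{i,t+1}/p_{it}-1$ for $i=1,2$, the trading signal $$S_t=\mathbb{1}\{\epsilon_t\le -k\sigma\}-\mathbb{1}\{\epsilon_t\ge k\sigma\},$$ and the pair return $r_{t+1}=S_t\,(r_{2,t+1}-r_{1,t+1})$. Let $Z$ be a standard normal random variable. Then the pair return $r_t$ has mean $$\mathbf{E}[r_t]=e^{\mu_1+\sigma_1^2/2+\sigma^2}\,\mathbf{P}(k-\sigma\le Z\le k+\sigma)$$ and variance $$\operatorname{Var}(r_t)=e^{2\mu_1+2\sigma_1^2+4\sigma^2}\big(\mathbf{P}(Z\le -k+2\sigma)+\mathbf{P}(Z\ge k+2\sigma)\big)-2e^{2\mu_1+2\sigma_1^2+\sigma^2}\big(\mathbf{P}(Z\le -k+\sigma)+\mathbf{P}(Z\ge k+\sigma)\big)+2e^{2\mu_1+2\sigma_1^2}\,\mathbf{P}(Z\ge k)-\mathbf{E}[r_t]^2.$$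
   Context: This models a "cointegrated pair" of stocks: stock 1's log-price is a Gaussian random walk with drift, and the log-price difference (the spread) $\epsilon_t$ is i.i.d. Gaussian. The signal is $+1$ when the spread is at most $-k\sigma$, $-1$ when it is at least $k\sigma$, and $0$ otherwise. *)

theory Defs
  imports "HOL-Probability.Probability"
begin

definition signal :: "real \<Rightarrow> real \<Rightarrow> real \<Rightarrow> real" where
  "signal k \<sigma> e = (if e \<le> - k * \<sigma> then 1 else 0) - (if e \<ge> k * \<sigma> then 1 else 0)"

abbreviation std_normal_law :: "real measure" where
  "std_normal_law \<equiv> density lborel std_normal_density"

definition ret :: "(nat \<Rightarrow> 'a \<Rightarrow> real) \<Rightarrow> nat \<Rightarrow> 'a \<Rightarrow> real" where
  "ret p s \<omega> = p (Suc s) \<omega> / p s \<omega> - 1"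

end

theory Submission imports Defs begin

lemma normal_exp_shift:
  assumes "\<sigma> > 0"
  shows "exp (c * x) * normal_density 0 \<sigma> x = exp (c\<^sup>2 * \<sigma>\<^sup>2 / 2) * normal_density (c * \<sigma>\<^sup>2) \<sigma> x"
proof -
  have "c * x + (- (x - 0)\<^sup>2 / (2 * \<sigma>\<^sup>2)) = c\<^sup>2 * \<sigma>\<^sup>2 / 2 + (- (x - c * \<sigma>\<^sup>2)\<^sup>2 / (2 * \<sigma>\<^sup>2))"
    using assms by (simp add: field_simps power2_eq_square)
  then have "exp (c * x) * exp (- (x - 0)\<^sup>2 / (2 * \<sigma>\<^sup>2)) = exp (c\<^sup>2 * \<sigma>\<^sup>2 / 2) * exp (- (x - c * \<sigma>\<^sup>2)\<^sup>2 / (2 * \<sigma>\<^sup>2))"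
    by (metis exp_add)
  then show ?thesis unfolding normal_density_def by (metis mult.left_commute)
qed

lemma measure_std_normal_int:
  assumes [measurable]: "A \<in> sets borel"
  shows "measure std_normal_law A = (\<integral>x. indicator A x * std_normal_density x \<partial>lborel)"
proof -
  interpret P: prob_space std_normal_law by (rule prob_space_normal_density) simp
  have "measure std_normal_law A = integral\<^sup>L std_normal_law (indicator A)"
    by simp
  also have "\<dots> = (\<integral>x. std_normal_density x * indicator A x \<partial>lborel)"
    by (subst integral_real_density) auto
  finally show ?thesis by (simp add: mult.commute)
qed

lemma normal_ray_le:
  assumes "\<sigma> > 0"
  shows "(\<integral>x. indicator {..a} x * normal_density m \<sigma> x \<partial>lborel) = measure std_normal_law {..(a - m) / \<sigma>}"
proof -
  have "(\<integral>x. indicator {..a} x * normal_density m \<sigma> x \<partial>lborel)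
      = \<bar>\<sigma>\<bar> *\<^sub>R (\<integral>y. indicator {..a} (m + \<sigma> * y) * normal_density m \<sigma> (m + \<sigma> * y) \<partial>lborel)"
    using assms by (intro lborel_integral_real_affine) simp
  also have "\<dots> = (\<integral>y. indicator {..(a - m) / \<sigma>} y * std_normal_density y \<partial>lborel)"
  proof -
    have "\<And>y. \<sigma> * (indicator {..a} (m + \<sigma> * y) * normal_density m \<sigma> (m + \<sigma> * y)) = indicator {..(a - m) / \<sigma>} y * std_normal_density y"
      using assms by (auto simp: normal_density_def indicator_def field_simps real_sqrt_mult power2_eq_square)
    then show ?thesis using assms by (simp flip: integral_mult_right_zero)
  qed
  also have "\<dots> = measure std_normal_law {..(a - m) / \<sigma>}"
    by (rule measure_std_normal_int[symmetric]) auto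
  finally show ?thesis .
qed

lemma normal_ray_ge:
  assumes "\<sigma> > 0"
  shows "(\<integral>x. indicator {a..} x * normal_density m \<sigma> x \<partial>lborel) = measure std_normal_law {(a - m) / \<sigma>..}"
proof -
  have "(\<integral>x. indicator {a..} x * normal_density m \<sigma> x \<partial>lborel)
      = \<bar>\<sigma>\<bar> *\<^sub>R (\<integral>y. indicator {a..} (m + \<sigma> * y) * normal_density m \<sigma> (m + \<sigma> * y) \<partial>lborel)"
    using assms by (intro lborel_integral_real_affine) simp
  also have "\<dots> = (\<integral>y. indicator {(a - m) / \<sigma>..} y * std_normal_density y \<partial>lborel)"
  proof -
    have "\<And>y. \<sigma> * (indicator {a..} (m + \<sigma> * y) * normal_density m \<sigma> (m + \<sigma> * y)) = indicator {(a - m) / \<sigma>..} y * std_normal_density y"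
      using assms by (auto simp: normal_density_def indicator_def field_simps real_sqrt_mult power2_eq_square)
    then show ?thesis using assms by (simp flip: integral_mult_right_zero)
  qed
  also have "\<dots> = measure std_normal_law {(a - m) / \<sigma>..}"
    by (rule measure_std_normal_int[symmetric]) auto
  finally show ?thesis .
qed

lemma std_normal_sym: "measure std_normal_law {..-a} = measure std_normal_law {a..}"
proof -
  have "measure std_normal_law {..-a} = (\<integral>x. indicator {..-a} x * std_normal_density x \<partial>lborel)"
    by (rule measure_std_normal_int) auto
  also have "\<dots> = \<bar>-1\<bar> *\<^sub>R (\<integral>x. indicator {..-a} (0 + -1 * x) * std_normal_density (0 + -1 * x) \<partial>lborel)"
    by (intro lborel_integral_real_affine) simp
  also have "\<dots> = (\<integral>x. indicator {a..} x * std_normal_density x \<partial>lborel)"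
    by (auto intro!: integral_cong simp: indicator_def normal_density_def)
  also have "\<dots> = measure std_normal_law {a..}"
    by (rule measure_std_normal_int[symmetric]) auto
  finally show ?thesis .
qed

lemma std_normal_interval:
  assumes "a \<le> b"
  shows "measure std_normal_law {a..b} = measure std_normal_law {a..} - measure std_normal_law {b..}"
proof -
  interpret P: prob_space std_normal_law by (rule prob_space_normal_density) simp
  have "measure std_normal_law {b} = (\<integral>x. indicator {b} x * std_normal_density x \<partial>lborel)"
    by (rule measure_std_normal_int) auto
  also have "\<dots> = (\<integral>x. (0::real) \<partial>(lborel::real measure))"
    apply (rule integral_cong_AE)
      apply simp
     apply simp
    apply (rule AE_mp[OF AE_lborel_singleton[of b]])
    apply auto
    done
  finally have 0: "measure std_normal_law {b} = 0" by simp
  have "{a..} = {a..b} \<union> {b<..}" using assms by auto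
  then have 1: "measure std_normal_law {a..} = measure std_normal_law {a..b} + measure std_normal_law {b<..}"
    using P.finite_measure_Union[of "{a..b}" "{b<..}"] by (simp add: Int_commute[of "{a..b}"] ivl_disj_int)
  have "{b..} = {b} \<union> {b<..}" by auto
  then have 2: "measure std_normal_law {b..} = measure std_normal_law {b} + measure std_normal_law {b<..}"
    using P.finite_measure_Union[of "{b}" "{b<..}"] by simp
  show ?thesis using 0 1 2 by simp
qed

lemma (in prob_space) normal_exp_ind:
  assumes X: "distributed M lborel X (normal_density 0 \<sigma>)" and \<sigma>: "\<sigma> > 0"
    and A[measurable]: "A \<in> sets borel"
  shows "integrable M (\<lambda>\<omega>. indicator A (X \<omega>) * exp (c * X \<omega>))"
    and "expectation (\<lambda>\<omega>. indicator A (X \<omega>) * exp (c * X \<omega>))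
         = exp (c\<^sup>2 * \<sigma>\<^sup>2 / 2) * (\<integral>x. indicator A x * normal_density (c * \<sigma>\<^sup>2) \<sigma> x \<partial>lborel)"
proof -
  have eq: "\<And>x. normal_density 0 \<sigma> x * (indicator A x * exp (c * x))
     = exp (c\<^sup>2 * \<sigma>\<^sup>2 / 2) * (indicator A x * normal_density (c * \<sigma>\<^sup>2) \<sigma> x)"
    using normal_exp_shift[OF \<sigma>, of c] by (simp add: algebra_simps)
  have int: "integrable lborel (\<lambda>x. normal_density 0 \<sigma> x * (indicator A x * exp (c * x)))"
    unfolding eq
    using integrable_real_mult_indicator[OF _ integrable_normal_density[of \<sigma> "c * \<sigma>\<^sup>2", OF \<sigma>], of A]
    by (intro integrable_mult_right) (auto simp: mult.commute)
  show "integrable M (\<lambda>\<omega>. indicator A (X \<omega>) * exp (c * X \<omega>))"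
    using distributed_integrable[OF X, of "\<lambda>x. indicator A x * exp (c * x)"] int by simp
  show "expectation (\<lambda>\<omega>. indicator A (X \<omega>) * exp (c * X \<omega>))
         = exp (c\<^sup>2 * \<sigma>\<^sup>2 / 2) * (\<integral>x. indicator A x * normal_density (c * \<sigma>\<^sup>2) \<sigma> x \<partial>lborel)"
    using distributed_integral[OF X, of "\<lambda>x. indicator A x * exp (c * x)"] unfolding eq by simp
qed

theorem theorem1:
  fixes M :: "'a measure"
    and \<mu>1 \<sigma>1 \<sigma> k :: real
    and p1 p2 \<delta> \<epsilon> :: "nat \<Rightarrow> 'a \<Rightarrow> real"
    and t :: nat
  assumes "prob_space M"
    and "\<sigma>1 > 0" and "\<sigma> > 0" and "k > 0"
    and pos1: "\<And>s \<omega>. \<omega> \<in> space M \<Longrightarrow> p1 s \<omega> > 0"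
    and pos2: "\<And>s \<omega>. \<omega> \<in> space M \<Longrightarrow> p2 s \<omega> > 0"
    and walk: "\<And>s \<omega>. \<omega> \<in> space M \<Longrightarrow>
                 ln (p1 (Suc s) \<omega>) = ln (p1 s \<omega>) + \<mu>1 + \<delta> (Suc s) \<omega>"
    and spread: "\<And>s \<omega>. \<omega> \<in> space M \<Longrightarrow> \<epsilon> s \<omega> = ln (p2 s \<omega>) - ln (p1 s \<omega>)"
    and \<delta>_dist: "\<And>s. distributed M lborel (\<delta> s) (normal_density 0 \<sigma>1)"
    and \<delta>_indep: "prob_space.indep_vars M (\<lambda>_. borel) \<delta> UNIV"
    and \<epsilon>_dist: "\<And>s. distributed M lborel (\<epsilon> s) (normal_density 0 \<sigma>)"
    and \<epsilon>_indep: "prob_space.indep_vars M (\<lambda>_. borel) \<epsilon> UNIV"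
    and fam_indep: "prob_space.indep_var M
                      (PiM UNIV (\<lambda>_. borel)) (\<lambda>\<omega> s. \<delta> s \<omega>)
                      (PiM UNIV (\<lambda>_. borel)) (\<lambda>\<omega> s. \<epsilon> s \<omega>)"
  defines "r \<equiv> \<lambda>\<omega>. signal k \<sigma> (\<epsilon> t \<omega>) * (ret p2 t \<omega> - ret p1 t \<omega>)"
    and "m \<equiv> exp (\<mu>1 + \<sigma>1\<^sup>2 / 2 + \<sigma>\<^sup>2) * measure std_normal_law {k - \<sigma> .. k + \<sigma>}"
  shows "integrable M r \<and> prob_space.expectation M r = m \<and>
         prob_space.variance M r =
           exp (2 * \<mu>1 + 2 * \<sigma>1\<^sup>2 + 4 * \<sigma>\<^sup>2)
             * (measure std_normal_law {.. - k + 2 * \<sigma>} + measure std_normal_law {k + 2 * \<sigma> ..})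
         - 2 * exp (2 * \<mu>1 + 2 * \<sigma>1\<^sup>2 + \<sigma>\<^sup>2)
             * (measure std_normal_law {.. - k + \<sigma>} + measure std_normal_law {k + \<sigma> ..})
         + 2 * exp (2 * \<mu>1 + 2 * \<sigma>1\<^sup>2) * measure std_normal_law {k ..}
         - m\<^sup>2"
proof -
  interpret prob_space M by (rule assms(1))
  have s0: "\<sigma> > 0" and k0: "k > 0" and s10: "\<sigma>1 > 0" using assms by auto
  define e0 where "e0 = \<epsilon> t"
  define e1 where "e1 = \<epsilon> (Suc t)"
  define d where "d = \<delta> (Suc t)"
  define L where "L = {..- k * \<sigma>}"
  define U where "U = {k * \<sigma>..}"
  have [measurable]: "L \<in> sets borel" "U \<in> sets borel" unfolding L_def U_def by auto
  have em[measurable]: "\<And>s. \<epsilon> s \<in> borel_measurable M"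
    using distributed_measurable[OF \<epsilon>_dist] by simp
  have dm[measurable]: "\<And>s. \<delta> s \<in> borel_measurable M"
    using distributed_measurable[OF \<delta>_dist] by simp
  have [measurable]: "e0 \<in> borel_measurable M" "e1 \<in> borel_measurable M" "d \<in> borel_measurable M"
    unfolding e0_def e1_def d_def by auto
  have e0d: "distributed M lborel e0 (normal_density 0 \<sigma>)" unfolding e0_def by (rule \<epsilon>_dist)
  have e1d: "distributed M lborel e1 (normal_density 0 \<sigma>)" unfolding e1_def by (rule \<epsilon>_dist)
  have dd: "distributed M lborel d (normal_density 0 \<sigma>1)" unfolding d_def by (rule \<delta>_dist)

  have I01: "indep_var borel e0 borel e1"
  proof -
    have ind: "indep_sets (\<lambda>i. sigma_sets (space M) {\<epsilon> i -` A \<inter> space M | A. A \<in> sets borel}) UNIV"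
      using \<epsilon>_indep unfolding indep_vars_def by blast
    have ev: "\<And>i. sigma_sets (space M) {\<epsilon> i -` A \<inter> space M | A. A \<in> sets borel} \<subseteq> events"
      using ind unfolding indep_sets_def by blast
    have tne: "t \<noteq> Suc t" by simp
    show ?thesis
      unfolding indep_var_eq indep_sets2_eq e0_def e1_def
    proof (intro conjI ballI)
      fix a b
      assume a: "a \<in> sigma_sets (space M) {\<epsilon> t -` A \<inter> space M | A. A \<in> sets borel}"
        and b: "b \<in> sigma_sets (space M) {\<epsilon> (Suc t) -` A \<inter> space M | A. A \<in> sets borel}"
      have "prob (\<Inter>j\<in>{t, Suc t}. (\<lambda>j. if j = t then a else b) j)
          = (\<Prod>j\<in>{t, Suc t}. prob ((\<lambda>j. if j = t then a else b) j))"
        by (rule indep_setsD[OF ind]) (use a b in auto)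
      then show "prob (a \<inter> b) = prob a * prob b" using tne by (simp add: Int_commute)
    qed (use ev in \<open>auto\<close>)
  qed
  have I01c: "\<And>f g. f \<in> borel_measurable borel \<Longrightarrow> g \<in> borel_measurable borel \<Longrightarrow>
      indep_var borel (\<lambda>\<omega>. f (e0 \<omega>)) borel (\<lambda>\<omega>. g (e1 \<omega>))"
    using indep_var_compose[OF I01] by (simp add: comp_def)

  have Eind: "\<And>A c. A \<in> sets borel \<Longrightarrow> integrable M (\<lambda>\<omega>. indicator A (e0 \<omega>) * exp (c * e0 \<omega>)) \<and>
      expectation (\<lambda>\<omega>. indicator A (e0 \<omega>) * exp (c * e0 \<omega>))
         = exp (c\<^sup>2 * \<sigma>\<^sup>2 / 2) * (\<integral>x. indicator A x * normal_density (c * \<sigma>\<^sup>2) \<sigma> x \<partial>lborel)"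
    using normal_exp_ind[OF e0d s0] by blast
  have Eexp: "\<And>c X s. distributed M lborel X (normal_density 0 s) \<Longrightarrow> s > 0 \<Longrightarrow>
      integrable M (\<lambda>\<omega>. exp (c * X \<omega>)) \<and> expectation (\<lambda>\<omega>. exp (c * X \<omega>)) = exp (c\<^sup>2 * s\<^sup>2 / 2)"
  proof -
    fix c X s assume X: "distributed M lborel X (normal_density 0 s)" and s: "s > 0"
    from normal_exp_ind[OF X s, of UNIV c]
    show "integrable M (\<lambda>\<omega>. exp (c * X \<omega>)) \<and> expectation (\<lambda>\<omega>. exp (c * X \<omega>)) = exp (c\<^sup>2 * s\<^sup>2 / 2)"
      using integral_normal_density[of s "c * s\<^sup>2"] s by simp
  qed
  have EL: "\<And>c. expectation (\<lambda>\<omega>. indicator L (e0 \<omega>) * exp (c * e0 \<omega>))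
      = exp (c\<^sup>2 * \<sigma>\<^sup>2 / 2) * measure std_normal_law {..(- k * \<sigma> - c * \<sigma>\<^sup>2) / \<sigma>}"
    using Eind normal_ray_le[OF s0] unfolding L_def by simp
  have EU: "\<And>c. expectation (\<lambda>\<omega>. indicator U (e0 \<omega>) * exp (c * e0 \<omega>))
      = exp (c\<^sup>2 * \<sigma>\<^sup>2 / 2) * measure std_normal_law {(k * \<sigma> - c * \<sigma>\<^sup>2) / \<sigma>..}"
    using Eind normal_ray_ge[OF s0] unfolding U_def by simp
  have IL: "\<And>c. integrable M (\<lambda>\<omega>. indicator L (e0 \<omega>) * exp (c * e0 \<omega>))" using Eind by simp
  have IU: "\<And>c. integrable M (\<lambda>\<omega>. indicator U (e0 \<omega>) * exp (c * e0 \<omega>))" using Eind by simp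

  define F where "F c \<omega> = (indicator L (e0 \<omega>) - indicator U (e0 \<omega>)) * exp (c * e0 \<omega>)" for c \<omega>
  define G where "G c \<omega> = (indicator L (e0 \<omega>) + indicator U (e0 \<omega>)) * exp (c * e0 \<omega>)" for c \<omega>
  have F_eq: "\<And>c. F c = (\<lambda>\<omega>. indicator L (e0 \<omega>) * exp (c * e0 \<omega>) - indicator U (e0 \<omega>) * exp (c * e0 \<omega>))"
    unfolding F_def by (auto simp: algebra_simps)
  have G_eq: "\<And>c. G c = (\<lambda>\<omega>. indicator L (e0 \<omega>) * exp (c * e0 \<omega>) + indicator U (e0 \<omega>) * exp (c * e0 \<omega>))"
    unfolding G_def by (auto simp: algebra_simps)
  have IF: "\<And>c. integrable M (F c)" unfolding F_eq using IL IU by auto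
  have IG: "\<And>c. integrable M (G c)" unfolding G_eq using IL IU by auto
  have EF: "\<And>c. expectation (F c) = exp (c\<^sup>2 * \<sigma>\<^sup>2 / 2) * (measure std_normal_law {..(- k * \<sigma> - c * \<sigma>\<^sup>2) / \<sigma>}
       - measure std_normal_law {(k * \<sigma> - c * \<sigma>\<^sup>2) / \<sigma>..})"
    unfolding F_eq using IL IU EL EU by (simp add: right_diff_distrib)
  have EG: "\<And>c. expectation (G c) = exp (c\<^sup>2 * \<sigma>\<^sup>2 / 2) * (measure std_normal_law {..(- k * \<sigma> - c * \<sigma>\<^sup>2) / \<sigma>}
       + measure std_normal_law {(k * \<sigma> - c * \<sigma>\<^sup>2) / \<sigma>..})"
    unfolding G_eq using IL IU EL EU by (simp add: distrib_left)

  have a1: "(- k * \<sigma> - (- 1) * \<sigma>\<^sup>2) / \<sigma> = - (k - \<sigma>)"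
    and a2: "(k * \<sigma> - (- 1) * \<sigma>\<^sup>2) / \<sigma> = k + \<sigma>"
    and a3: "(- k * \<sigma> - 0 * \<sigma>\<^sup>2) / \<sigma> = - k"
    and a4: "(k * \<sigma> - 0 * \<sigma>\<^sup>2) / \<sigma> = k"
    and a5: "(- k * \<sigma> - (- 2) * \<sigma>\<^sup>2) / \<sigma> = - k + 2 * \<sigma>"
    and a6: "(k * \<sigma> - (- 2) * \<sigma>\<^sup>2) / \<sigma> = k + 2 * \<sigma>"
    and a7: "(- k * \<sigma> - (- 1) * \<sigma>\<^sup>2) / \<sigma> = - k + \<sigma>"
    using s0 by (simp_all add: field_simps power2_eq_square)
  have EF1: "expectation (F (- 1)) = exp (\<sigma>\<^sup>2 / 2) * measure std_normal_law {k - \<sigma> .. k + \<sigma>}"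
    using EF[of "- 1", unfolded a1 a2] std_normal_sym[of "k - \<sigma>"] std_normal_interval[of "k - \<sigma>" "k + \<sigma>"] s0
    by simp
  have EF0: "expectation (F 0) = 0"
    using EF[of 0, unfolded a3 a4] std_normal_sym[of k] by simp
  have EG2: "expectation (G (- 2)) = exp (2 * \<sigma>\<^sup>2) * (measure std_normal_law {.. - k + 2 * \<sigma>} + measure std_normal_law {k + 2 * \<sigma> ..})"
    using EG[of "- 2", unfolded a5 a6] by simp
  have EG1: "expectation (G (- 1)) = exp (\<sigma>\<^sup>2 / 2) * (measure std_normal_law {.. - k + \<sigma>} + measure std_normal_law {k + \<sigma> ..})"
    using EG[of "- 1", unfolded a7 a2] by simp
  have EG0: "expectation (G 0) = 2 * measure std_normal_law {k ..}"
    using EG[of 0, unfolded a3 a4] std_normal_sym[of k] by simp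

  have Ffun: "\<And>c. F c = (\<lambda>\<omega>. (\<lambda>x. (indicator L x - indicator U x) * exp (c * x)) (e0 \<omega>))"
    by (simp add: F_def fun_eq_iff)
  have Gfun: "\<And>c. G c = (\<lambda>\<omega>. (\<lambda>x. (indicator L x + indicator U x) * exp (c * x)) (e0 \<omega>))"
    by (simp add: G_def fun_eq_iff)
  have IndF: "indep_var borel (F c) borel (\<lambda>\<omega>. exp (c' * e1 \<omega>))" for c c'
    using I01c[of "\<lambda>x. (indicator L x - indicator U x) * exp (c * x)" "\<lambda>x. exp (c' * x)"] by (simp add: Ffun)
  have IndG: "indep_var borel (G c) borel (\<lambda>\<omega>. exp (c' * e1 \<omega>))" for c c'
    using I01c[of "\<lambda>x. (indicator L x + indicator U x) * exp (c * x)" "\<lambda>x. exp (c' * x)"] by (simp add: Gfun)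
  have Ie1: "\<And>c. integrable M (\<lambda>\<omega>. exp (c * e1 \<omega>))" and Ee1: "\<And>c. expectation (\<lambda>\<omega>. exp (c * e1 \<omega>)) = exp (c\<^sup>2 * \<sigma>\<^sup>2 / 2)"
    using Eexp[OF e1d s0] by auto
  have Id: "\<And>c. integrable M (\<lambda>\<omega>. exp (c * d \<omega>))" and Ed: "\<And>c. expectation (\<lambda>\<omega>. exp (c * d \<omega>)) = exp (c\<^sup>2 * \<sigma>1\<^sup>2 / 2)"
    using Eexp[OF dd s10] by auto

  have IndF1: "indep_var borel (F c) borel (\<lambda>\<omega>. exp (e1 \<omega>))" for c using IndF[of c 1] by simp
  have IndG1: "indep_var borel (G c) borel (\<lambda>\<omega>. exp (e1 \<omega>))" for c using IndG[of c 1] by simp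
  have Ie11: "integrable M (\<lambda>\<omega>. exp (e1 \<omega>))" using Ie1[of 1] by simp
  have Ee11: "expectation (\<lambda>\<omega>. exp (e1 \<omega>)) = exp (\<sigma>\<^sup>2 / 2)" using Ee1[of 1] by simp
  define X where "X \<omega> = exp (\<mu>1 + d \<omega>)" for \<omega>
  define Y where "Y \<omega> = F (- 1) \<omega> * exp (e1 \<omega>) - F 0 \<omega>" for \<omega>

  have X_eq: "X = (\<lambda>\<omega>. exp \<mu>1 * exp (1 * d \<omega>))" by (simp add: X_def fun_eq_iff exp_add)
  have X2_eq: "(\<lambda>\<omega>. (X \<omega>)\<^sup>2) = (\<lambda>\<omega>. exp (2 * \<mu>1) * exp (2 * d \<omega>))"
    by (simp add: X_def fun_eq_iff exp_add[symmetric] power2_eq_square algebra_simps)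
  have IX: "integrable M X" unfolding X_eq using Id[of 1] by simp
  have EX: "expectation X = exp (\<mu>1 + \<sigma>1\<^sup>2 / 2)" unfolding X_eq using Ed[of 1] Id[of 1] by (simp add: exp_add)
  have IX2: "integrable M (\<lambda>\<omega>. (X \<omega>)\<^sup>2)" unfolding X2_eq using Id[of 2] by simp
  have EX2: "expectation (\<lambda>\<omega>. (X \<omega>)\<^sup>2) = exp (2 * \<mu>1 + 2 * \<sigma>1\<^sup>2)" unfolding X2_eq using Ed[of 2] Id[of 2] by (simp add: exp_add)

  have IY: "integrable M Y" unfolding Y_def
    using indep_var_integrable[OF IndF1 IF Ie11] IF by auto
  have EY: "expectation Y = exp (\<sigma>\<^sup>2) * measure std_normal_law {k - \<sigma> .. k + \<sigma>}" unfolding Y_def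
    using indep_var_integrable[OF IndF1 IF Ie11] IF indep_var_lebesgue_integral[OF IndF1 IF Ie11] EF1 EF0 Ee11
    by (simp add: mult_exp_exp)
  have Y2: "(Y \<omega>)\<^sup>2 = G (- 2) \<omega> * exp (2 * e1 \<omega>) - 2 * (G (- 1) \<omega> * exp (e1 \<omega>)) + G 0 \<omega>" for \<omega>
  proof -
    have nLU: "\<not> (e0 \<omega> \<in> L \<and> e0 \<omega> \<in> U)" using s0 k0 unfolding L_def U_def
      by (auto simp: mult_pos_pos) (smt (verit) mult_pos_pos)
    have ex: "exp (- 2 * e0 \<omega>) * exp (2 * e1 \<omega>) = (exp (- e0 \<omega>) * exp (e1 \<omega>))\<^sup>2"
      by (simp add: power2_eq_square mult_exp_exp algebra_simps)
    show ?thesis unfolding Y_def F_def G_def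
      using nLU ex by (auto simp: indicator_def power2_eq_square algebra_simps)
  qed
  have Y2_eq: "(\<lambda>\<omega>. (Y \<omega>)\<^sup>2) = (\<lambda>\<omega>. G (- 2) \<omega> * exp (2 * e1 \<omega>) - 2 * (G (- 1) \<omega> * exp (e1 \<omega>)) + G 0 \<omega>)"
    using Y2 by auto
  have IY2: "integrable M (\<lambda>\<omega>. (Y \<omega>)\<^sup>2)" unfolding Y2_eq
    using indep_var_integrable[OF IndG1 IG Ie11] indep_var_integrable[OF IndG IG Ie1] IG by auto
  have ee1: "exp (2 * \<sigma>\<^sup>2) * exp (2 * \<sigma>\<^sup>2) = exp (4 * \<sigma>\<^sup>2)" by (simp add: mult_exp_exp)
  have ee2: "exp (\<sigma>\<^sup>2 / 2) * exp (\<sigma>\<^sup>2 / 2) = exp (\<sigma>\<^sup>2)" by (simp add: mult_exp_exp)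
  have EY2: "expectation (\<lambda>\<omega>. (Y \<omega>)\<^sup>2) = exp (4 * \<sigma>\<^sup>2) * (measure std_normal_law {.. - k + 2 * \<sigma>} + measure std_normal_law {k + 2 * \<sigma> ..})
     - 2 * exp (\<sigma>\<^sup>2) * (measure std_normal_law {.. - k + \<sigma>} + measure std_normal_law {k + \<sigma> ..})
     + 2 * measure std_normal_law {k ..}"
    unfolding Y2_eq
    using indep_var_integrable[OF IndG1 IG Ie11] indep_var_lebesgue_integral[OF IndG1 IG Ie11]
      indep_var_integrable[OF IndG[of "- 2" 2] IG Ie1[of 2]] indep_var_lebesgue_integral[OF IndG[of "- 2" 2] IG Ie1[of 2]]
      IG EG2 EG1 EG0 Ee11 Ee1[of 2]
    apply (simp add: mult_exp_exp)
    apply (simp only: ee1[symmetric] ee2[symmetric])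
    apply (simp add: algebra_simps)
    done

  have sig: "signal k \<sigma> x = indicator L x - indicator U x" for x
  proof -
    have "k * \<sigma> > 0" using s0 k0 by simp
    then show ?thesis unfolding signal_def L_def U_def indicator_def by auto
  qed
  have r_eq: "r \<omega> = X \<omega> * Y \<omega>" if \<omega>: "\<omega> \<in> space M" for \<omega>
  proof -
    have p1: "p1 (Suc t) \<omega> = p1 t \<omega> * X \<omega>"
    proof -
      have "p1 (Suc t) \<omega> = exp (ln (p1 (Suc t) \<omega>))" using pos1[OF \<omega>] by simp
      also have "\<dots> = exp (ln (p1 t \<omega>)) * X \<omega>" using walk[OF \<omega>, of t]
        by (simp add: X_def d_def exp_add[symmetric] add.assoc)
      finally show ?thesis using pos1[OF \<omega>] by simp
    qed
    have p2: "p2 s \<omega> = exp (\<epsilon> s \<omega>) * p1 s \<omega>" for s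
    proof -
      have "p2 s \<omega> = exp (ln (p2 s \<omega>))" using pos2[OF \<omega>] by simp
      also have "\<dots> = exp (\<epsilon> s \<omega>) * exp (ln (p1 s \<omega>))" using spread[OF \<omega>, of s]
        by (simp add: exp_add[symmetric])
      finally show ?thesis using pos1[OF \<omega>] by simp
    qed
    have q1: "ret p1 t \<omega> = X \<omega> - 1" unfolding ret_def p1 using pos1[OF \<omega>, of t] by simp
    have q2: "ret p2 t \<omega> = exp (e1 \<omega>) * exp (- e0 \<omega>) * X \<omega> - 1"
      unfolding ret_def p2 p1 e0_def e1_def using pos1[OF \<omega>, of t]
      by (simp add: field_simps exp_minus)
    show ?thesis unfolding r_def q1 q2 Y_def F_def sig e0_def[symmetric]
      by (simp add: algebra_simps)
  qed
  have r2_eq: "(r \<omega>)\<^sup>2 = (X \<omega>)\<^sup>2 * (Y \<omega>)\<^sup>2" if "\<omega> \<in> space M" for \<omega>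
    using r_eq[OF that] by (simp add: power_mult_distrib)

  define fX where "fX x = exp (\<mu>1 + x (Suc t))" for x :: "nat \<Rightarrow> real"
  define fY where "fY x = ((indicator L (x t) - indicator U (x t)) * exp (- 1 * x t)) * exp (x (Suc t))
      - (indicator L (x t) - indicator U (x t)) * exp (0 * x t)" for x :: "nat \<Rightarrow> real"
  have fXm: "fX \<in> borel_measurable (PiM UNIV (\<lambda>_. borel))" unfolding fX_def by measurable
  have fYm: "fY \<in> borel_measurable (PiM UNIV (\<lambda>_. borel))" unfolding fY_def by measurable
  have fX2m: "(\<lambda>x. (fX x)\<^sup>2) \<in> borel_measurable (PiM UNIV (\<lambda>_. borel))" using fXm by measurable
  have fY2m: "(\<lambda>x. (fY x)\<^sup>2) \<in> borel_measurable (PiM UNIV (\<lambda>_. borel))" using fYm by measurable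
  have XY: "X = fX \<circ> (\<lambda>\<omega> s. \<delta> s \<omega>)" "Y = fY \<circ> (\<lambda>\<omega> s. \<epsilon> s \<omega>)"
    by (auto simp: fun_eq_iff X_def fX_def d_def Y_def fY_def F_def e0_def e1_def)
  have IndXY: "indep_var borel X borel Y"
    unfolding XY by (rule indep_var_compose[OF fam_indep fXm fYm])
  have IndXY2: "indep_var borel (\<lambda>\<omega>. (X \<omega>)\<^sup>2) borel (\<lambda>\<omega>. (Y \<omega>)\<^sup>2)"
    using indep_var_compose[OF fam_indep fX2m fY2m] unfolding XY by (simp add: comp_def)

  have Ir: "integrable M r"
    using indep_var_integrable[OF IndXY IX IY] by (subst Bochner_Integration.integrable_cong[OF refl r_eq]) auto
  have Er: "expectation r = m"
  proof -
    have "expectation r = expectation (\<lambda>\<omega>. X \<omega> * Y \<omega>)" by (rule Bochner_Integration.integral_cong[OF refl r_eq])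
    also have "\<dots> = expectation X * expectation Y" by (rule indep_var_lebesgue_integral[OF IndXY IX IY])
    also have "\<dots> = m" unfolding EX EY m_def by (simp add: mult_exp_exp algebra_simps)
    finally show ?thesis .
  qed
  have Ir2: "integrable M (\<lambda>\<omega>. (r \<omega>)\<^sup>2)"
    using indep_var_integrable[OF IndXY2 IX2 IY2] by (subst Bochner_Integration.integrable_cong[OF refl r2_eq]) auto
  have Er2: "expectation (\<lambda>\<omega>. (r \<omega>)\<^sup>2) = expectation (\<lambda>\<omega>. (X \<omega>)\<^sup>2) * expectation (\<lambda>\<omega>. (Y \<omega>)\<^sup>2)"
  proof -
    have "expectation (\<lambda>\<omega>. (r \<omega>)\<^sup>2) = expectation (\<lambda>\<omega>. (X \<omega>)\<^sup>2 * (Y \<omega>)\<^sup>2)" by (rule Bochner_Integration.integral_cong[OF refl r2_eq])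
    also have "\<dots> = expectation (\<lambda>\<omega>. (X \<omega>)\<^sup>2) * expectation (\<lambda>\<omega>. (Y \<omega>)\<^sup>2)"
      by (rule indep_var_lebesgue_integral[OF IndXY2 IX2 IY2])
    finally show ?thesis .
  qed
  have V: "variance r = expectation (\<lambda>\<omega>. (r \<omega>)\<^sup>2) - m\<^sup>2"
    using variance_eq[OF Ir Ir2] Er by simp
  have f1: "exp (2 * \<mu>1 + 2 * \<sigma>1\<^sup>2) * exp (4 * \<sigma>\<^sup>2) = exp (2 * \<mu>1 + 2 * \<sigma>1\<^sup>2 + 4 * \<sigma>\<^sup>2)"
    and f2: "exp (2 * \<mu>1 + 2 * \<sigma>1\<^sup>2) * exp (\<sigma>\<^sup>2) = exp (2 * \<mu>1 + 2 * \<sigma>1\<^sup>2 + \<sigma>\<^sup>2)"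
    by (simp_all add: mult_exp_exp)
  show ?thesis
    unfolding V Er2 EX2 EY2 f1[symmetric] f2[symmetric] using Ir Er
    by (simp add: algebra_simps)
qed

end
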